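(* If the additive group of a ring $K$ is finitely generated, then $K$ is finitely separable.
   Context: Rings are associative and not necessarily unital. A ring $K$ is finitely separable if for every $a\in K$ and every subring $A\subseteq K$ with $a\notin A$ there exist a finite ring $F$ and a homomorphism $\varphi:K\to F$ with $\varphi(a)\notin\varphi(A)$. *)

theory Defs
  imports Main
begin

text \<open>Rings are associative, not necessarily unital: Isabelle's type class ring
  (semiring + ab_group_add, no unit) is exactly this notion.\<close>

inductive_set add_span :: "'a::ab_group_add set \<Rightarrow> 'a set" for S where
  gen: "s \<in> S \<Longrightarrow> s \<in> add_span S"
| zero: "0 \<in> add_span S"
| add: "x \<in> add_span S \<Longrightarrow> y \<in> add_span S \<Longrightarrow> x + y \<in> add_span S"
| neg: "x \<in> add_span S \<Longrightarrow> - x \<in> add_span S"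

definition add_fin_gen :: "'a::ab_group_add itself \<Rightarrow> bool" where
  "add_fin_gen _ \<longleftrightarrow> (\<exists>S::'a set. finite S \<and> add_span S = UNIV)"

definition subring :: "'a::ring set \<Rightarrow> bool" where
  "subring A \<longleftrightarrow> 0 \<in> A \<and> (\<forall>x\<in>A. \<forall>y\<in>A. x + y \<in> A \<and> - x \<in> A \<and> x * y \<in> A)"

definition is_ring :: "'b set \<Rightarrow> ('b \<Rightarrow> 'b \<Rightarrow> 'b) \<Rightarrow> ('b \<Rightarrow> 'b \<Rightarrow> 'b) \<Rightarrow> 'b \<Rightarrow> ('b \<Rightarrow> 'b) \<Rightarrow> bool" where
  "is_ring F pl ml z ng \<longleftrightarrow>
     z \<in> F \<and>
     (\<forall>x\<in>F. \<forall>y\<in>F. pl x y \<in> F \<and> ml x y \<in> F) \<and> (\<forall>x\<in>F. ng x \<in> F) \<and>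
     (\<forall>x\<in>F. \<forall>y\<in>F. \<forall>w\<in>F. pl (pl x y) w = pl x (pl y w)) \<and>
     (\<forall>x\<in>F. \<forall>y\<in>F. pl x y = pl y x) \<and>
     (\<forall>x\<in>F. pl z x = x) \<and>
     (\<forall>x\<in>F. pl (ng x) x = z) \<and>
     (\<forall>x\<in>F. \<forall>y\<in>F. \<forall>w\<in>F. ml (ml x y) w = ml x (ml y w)) \<and>
     (\<forall>x\<in>F. \<forall>y\<in>F. \<forall>w\<in>F. ml x (pl y w) = pl (ml x y) (ml x w)) \<and>
     (\<forall>x\<in>F. \<forall>y\<in>F. \<forall>w\<in>F. ml (pl x y) w = pl (ml x w) (ml y w))"

definition is_ring_hom :: "('a::ring \<Rightarrow> 'b) \<Rightarrow> 'b set \<Rightarrow> ('b \<Rightarrow> 'b \<Rightarrow> 'b) \<Rightarrow> ('b \<Rightarrow> 'b \<Rightarrow> 'b) \<Rightarrow> bool" where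
  "is_ring_hom \<phi> F pl ml \<longleftrightarrow>
     (\<forall>x. \<phi> x \<in> F) \<and> (\<forall>x y. \<phi> (x + y) = pl (\<phi> x) (\<phi> y)) \<and> (\<forall>x y. \<phi> (x * y) = ml (\<phi> x) (\<phi> y))"

text \<open>Finite separability. Every finite ring is isomorphic to one whose carrier is
  a set of natural numbers, so the finite ring F is taken with carrier in nat.\<close>
definition finitely_separable :: "'a::ring itself \<Rightarrow> bool" where
  "finitely_separable _ \<longleftrightarrow>
     (\<forall>(a::'a) A. subring A \<longrightarrow> a \<notin> A \<longrightarrow>
        (\<exists>(F::nat set) pl ml z ng \<phi>. finite F \<and> is_ring F pl ml z ng \<and>
            is_ring_hom \<phi> F pl ml \<and> \<phi> a \<notin> \<phi> ` A))"

end

theory Submission imports Defs "HOL-Library.FuncSet" begin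

primrec nm :: "nat \<Rightarrow> 'a::ab_group_add \<Rightarrow> 'a" where
  "nm 0 x = 0" | "nm (Suc n) x = x + nm n x"

lemma nm_add: "nm (m+n) x = nm m x + nm n x"
  by (induct m) (simp_all add: add.assoc)
lemma nm_plus: "nm n (x+y) = nm n x + nm n y"
  by (induct n) (simp_all add: algebra_simps)
lemma nm_minus: "nm n (-x) = - nm n x"
  by (induct n) (simp_all add: algebra_simps)
lemma nm_diff: "nm n (x-y) = nm n x - nm n y"
  by (metis nm_plus nm_minus diff_conv_add_uminus)
lemma nm_mult: "nm (m*n) x = nm m (nm n x)"
  by (induct m) (simp_all add: nm_add)
lemma nm_lmul: "nm n (x::'a::ring) * y = nm n (x*y)"
  by (induct n) (simp_all add: algebra_simps)
lemma nm_rmul: "(x::'a::ring) * nm n y = nm n (x*y)"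
  by (induct n) (simp_all add: algebra_simps)

definition zm :: "int \<Rightarrow> 'a::ab_group_add \<Rightarrow> 'a" where
  "zm k x = nm (nat k) x - nm (nat (-k)) x"

lemma zm_diff: "zm (int a - int b) x = nm a x - nm b x"
proof -
  let ?k = "int a - int b"
  have "nat ?k + b = a + nat (-?k)" by arith
  hence "nm (nat ?k) x + nm b x = nm a x + nm (nat (-?k)) x" by (metis nm_add)
  thus ?thesis unfolding zm_def by (simp add: algebra_simps)
qed

lemma int_split: "(k::int) = int (nat k) - int (nat (-k))" by arith

lemma zm_add: "zm (k+l) x = zm k x + zm l x"
proof -
  obtain a b c d where k: "k = int a - int b" and l: "l = int c - int d"
    using int_split by blast
  have "k + l = int (a+c) - int (b+d)" unfolding k l by simp
  hence "zm (k+l) x = nm (a+c) x - nm (b+d) x" using zm_diff by metis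
  moreover have "zm k x = nm a x - nm b x" "zm l x = nm c x - nm d x" unfolding k l zm_diff by auto
  ultimately show ?thesis by (simp add: nm_add diff_add_eq add_diff_eq diff_diff_eq add.assoc add.left_commute)
qed
lemma zm_plus: "zm k (x+y) = zm k x + zm k y"
  unfolding zm_def by (simp add: nm_plus algebra_simps)
lemma zm_uminus_right: "zm k (-x) = - zm k x"
  unfolding zm_def by (simp add: nm_minus algebra_simps)
lemma zm_minus_right: "zm k (x-y) = zm k x - zm k y"
  unfolding zm_def by (simp add: nm_diff algebra_simps)
lemma zm_uminus_left: "zm (-k) x = - zm k x"
  unfolding zm_def by (simp add: algebra_simps)
lemma zm_diff_left: "zm (k-l) x = zm k x - zm l x"
  using zm_add[of k "-l" x] by (simp add: zm_uminus_left)
lemma zm_0[simp]: "zm 0 x = 0" unfolding zm_def by simp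
lemma zm_1[simp]: "zm 1 x = x" unfolding zm_def by simp
lemma zm_0r[simp]: "zm k 0 = 0" using zm_plus[of k 0 0] by simp
lemma zm_mult: "zm (k*l) x = zm k (zm l x)"
proof -
  obtain a b c d where k: "k = int a - int b" and l: "l = int c - int d"
    using int_split by blast
  have "k * l = int (a*c+b*d) - int (a*d+b*c)" unfolding k l by (simp add: algebra_simps)
  hence "zm (k*l) x = nm (a*c+b*d) x - nm (a*d+b*c) x" using zm_diff by metis
  also have "\<dots> = zm k (zm l x)" unfolding k l zm_diff nm_diff
    by (simp add: nm_add nm_mult nm_diff algebra_simps)
  finally show ?thesis .
qed
lemma zm_lmul: "zm k (x::'a::ring) * y = zm k (x*y)"
  unfolding zm_def by (simp add: nm_lmul algebra_simps)
lemma zm_rmul: "(x::'a::ring) * zm k y = zm k (x*y)"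
  unfolding zm_def by (simp add: nm_rmul algebra_simps)
lemma zm_sum: "zm k (sum f A) = (\<Sum>i\<in>A. zm k (f i))"
  by (induct A rule: infinite_finite_induct) (simp_all add: zm_plus)


definition grp :: "'a::ab_group_add set \<Rightarrow> bool" where
  "grp B \<longleftrightarrow> 0 \<in> B \<and> (\<forall>x\<in>B. \<forall>y\<in>B. x + y \<in> B \<and> -x \<in> B)"

lemma grpD: assumes "grp B" shows "0 \<in> B" "x \<in> B \<Longrightarrow> y \<in> B \<Longrightarrow> x + y \<in> B"
  "x \<in> B \<Longrightarrow> -x \<in> B" "x \<in> B \<Longrightarrow> y \<in> B \<Longrightarrow> x - y \<in> B"
  using assms unfolding grp_def by (auto simp del: add_uminus_conv_diff simp add: diff_conv_add_uminus)

lemma grp_nm: "grp B \<Longrightarrow> x \<in> B \<Longrightarrow> nm n x \<in> B"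
  by (induct n) (auto intro: grpD)

lemma grp_zm: "grp B \<Longrightarrow> x \<in> B \<Longrightarrow> zm k x \<in> B"
  unfolding zm_def by (intro grpD grp_nm)

lemma grp_span: "grp (add_span S)"
  unfolding grp_def by (auto intro: add_span.intros)

lemma grp_Int: "grp B \<Longrightarrow> grp C \<Longrightarrow> grp (B \<inter> C)"
  unfolding grp_def by auto

lemma span_mono: "x \<in> add_span S \<Longrightarrow> S \<subseteq> T \<Longrightarrow> x \<in> add_span T"
  by (induct rule: add_span.induct) (auto intro: add_span.intros)

lemma span_empty: "add_span {} = {0}"
proof -
  have "x \<in> add_span {} \<Longrightarrow> x = 0" for x::'a
    by (induct rule: add_span.induct) auto
  thus ?thesis by (auto intro: add_span.intros)
qed

lemma span_insert: "add_span (insert s S) = {zm t s + y |t y. y \<in> add_span S}"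
proof
  show "add_span (insert s S) \<subseteq> {zm t s + y |t y. y \<in> add_span S}"
  proof
    fix x assume "x \<in> add_span (insert s S)"
    thus "x \<in> {zm t s + y |t y. y \<in> add_span S}"
    proof (induct rule: add_span.induct)
      case (gen x)
      then show ?case
      proof
        assume "x = s" thus ?thesis by (intro CollectI exI[of _ 1] exI[of _ 0]) (auto intro: add_span.intros)
      next
        assume "x \<in> S" thus ?thesis by (intro CollectI exI[of _ 0] exI[of _ x]) (auto intro: add_span.intros)
      qed
    next
      case zero
      then show ?case by (intro CollectI exI[of _ 0] exI[of _ 0]) (auto intro: add_span.intros)
    next
      case (add x y)
      then obtain t1 y1 t2 y2 where "x = zm t1 s + y1" "y1 \<in> add_span S" "y = zm t2 s + y2" "y2 \<in> add_span S"
        by auto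
      thus ?case by (intro CollectI exI[of _ "t1+t2"] exI[of _ "y1+y2"])
          (auto intro: add_span.intros simp: zm_add algebra_simps)
    next
      case (neg x)
      then obtain t1 y1 where "x = zm t1 s + y1" "y1 \<in> add_span S"
        by auto
      thus ?case by (intro CollectI exI[of _ "-t1"] exI[of _ "-y1"])
          (auto intro: add_span.intros simp: zm_uminus_left algebra_simps)
    qed
  qed
next
  show "{zm t s + y |t y. y \<in> add_span S} \<subseteq> add_span (insert s S)"
  proof safe
    fix t y assume "y \<in> add_span S"
    hence "y \<in> add_span (insert s S)" by (rule span_mono) auto
    moreover have "zm t s \<in> add_span (insert s S)" by (intro grp_zm grp_span) (auto intro: add_span.intros)
    ultimately show "zm t s + y \<in> add_span (insert s S)" by (auto intro: add_span.intros)
  qed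
qed

lemma span_rep: assumes "finite S" "x \<in> add_span S" shows "\<exists>h. x = (\<Sum>s\<in>S. zm (h s) s)"
  using assms(2)
proof (induct rule: add_span.induct)
  case (gen x)
  have "(\<Sum>t\<in>S. zm (if t = x then 1 else 0) t) = (\<Sum>t\<in>S. if t = x then t else 0)"
    by (rule sum.cong) auto
  also have "\<dots> = x" using gen assms(1) by (simp add: sum.delta')
  finally show ?case by metis
next
  case zero
  show ?case by (rule exI[of _ "\<lambda>_. 0"]) simp
next
  case (add x y)
  then obtain h1 h2 where "x = (\<Sum>s\<in>S. zm (h1 s) s)" "y = (\<Sum>s\<in>S. zm (h2 s) s)" by blast
  thus ?case by (intro exI[of _ "\<lambda>s. h1 s + h2 s"]) (simp add: zm_add sum.distrib)
next
  case (neg x)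
  then obtain h1 where "x = (\<Sum>s\<in>S. zm (h1 s) s)" by blast
  thus ?case by (intro exI[of _ "\<lambda>s. - h1 s"]) (simp add: zm_uminus_left sum_negf)
qed

lemma int_sub:
  fixes I :: "int set"
  assumes "0 \<in> I" "\<And>x y. x \<in> I \<Longrightarrow> y \<in> I \<Longrightarrow> x + y \<in> I" "\<And>x. x \<in> I \<Longrightarrow> -x \<in> I"
  shows "\<exists>d\<ge>0. d \<in> I \<and> (\<forall>t\<in>I. d dvd t)"
proof (cases "\<exists>t\<in>I. t > 0")
  case False
  hence "\<forall>t\<in>I. t = 0" using assms(3) by (metis neg_0_less_iff_less not_less_iff_gr_or_eq)
  thus ?thesis using assms(1) by auto
next
  case True
  have mul: "k * t \<in> I" if "t \<in> I" for k t
  proof (induct k rule: int_induct[of _ 0])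
    case base then show ?case using assms(1) by simp
  next
    case (step1 i) then show ?case using assms(2)[OF step1(2) that] by (simp add: algebra_simps)
  next
    case (step2 i) then show ?case using assms(2)[OF step2(2) assms(3)[OF that]] by (simp add: algebra_simps)
  qed
  obtain t0 where t0: "t0 \<in> I" "t0 > 0" using True by blast
  define n where "n = (LEAST n::nat. n > 0 \<and> int n \<in> I)"
  have nI: "n > 0 \<and> int n \<in> I" unfolding n_def
    by (rule LeastI[of _ "nat t0"]) (use t0 in auto)
  have nmin: "m \<ge> n" if "m > 0" "int m \<in> I" for m unfolding n_def
    by (rule Least_le) (use that in auto)
  have "int n dvd t" if "t \<in> I" for t
  proof -
    have "t + (- (t div int n) * int n) \<in> I" by (intro assms(2) that mul nI[THEN conjunct2])
    hence r: "t mod int n \<in> I" by (metis add.commute minus_mult_minus mod_mult_div_eq add_diff_cancel_right' diff_conv_add_uminus mult.commute mult_minus_left)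
    have "t mod int n < int n" "t mod int n \<ge> 0" using nI by auto
    hence "t mod int n = 0"
      using nmin[of "nat (t mod int n)"] r by (cases "t mod int n > 0") auto
    thus ?thesis by auto
  qed
  thus ?thesis using nI by (intro exI[of _ "int n"]) auto
qed


lemma closed:
  "grp B \<Longrightarrow> B \<subseteq> add_span (set L) \<Longrightarrow> x \<in> add_span (set L) \<Longrightarrow> x \<notin> B \<Longrightarrow>
   \<exists>n>0. \<forall>b\<in>B. \<forall>w\<in>add_span (set L). x \<noteq> b + zm n w"
proof (induct L arbitrary: B x)
  case Nil
  thus ?case using grpD(1)[OF Nil(1)] by (simp add: span_empty)
next
  case (Cons s L)
  define G' where "G' = add_span (set L)"
  have G: "add_span (set (s # L)) = {zm t s + y |t y. y \<in> G'}"
    unfolding G'_def by (simp add: span_insert)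
  have gG': "grp G'" unfolding G'_def by (rule grp_span)
  have B: "grp B" "x \<notin> B" by fact+
  have BG: "b \<in> B \<Longrightarrow> \<exists>t y. b = zm t s + y \<and> y \<in> G'" for b using Cons(3) G by auto
  obtain x0 x' where x: "x = zm x0 s + x'" "x' \<in> G'" using Cons(4) G by auto
  define I where "I = {t. \<exists>y\<in>G'. zm t s + y \<in> B}"
  have "\<exists>d\<ge>0. d \<in> I \<and> (\<forall>t\<in>I. d dvd t)"
  proof (rule int_sub)
    show "0 \<in> I" unfolding I_def using grpD(1)[OF gG'] grpD(1)[OF B(1)] by force
  next
    fix a b assume "a \<in> I" "b \<in> I"
    then obtain y1 y2 where "y1 \<in> G'" "zm a s + y1 \<in> B" "y2 \<in> G'" "zm b s + y2 \<in> B" unfolding I_def by auto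
    hence "y1 + y2 \<in> G'" "zm (a+b) s + (y1 + y2) \<in> B"
      using grpD(2)[OF gG'] grpD(2)[OF B(1), of "zm a s + y1" "zm b s + y2"]
      by (auto simp: zm_add algebra_simps)
    thus "a + b \<in> I" unfolding I_def by auto
  next
    fix a assume "a \<in> I"
    then obtain y1 where "y1 \<in> G'" "zm a s + y1 \<in> B" unfolding I_def by auto
    hence "- y1 \<in> G'" "zm (-a) s + (- y1) \<in> B"
      using grpD(3)[OF gG'] grpD(3)[OF B(1), of "zm a s + y1"]
      by (auto simp: zm_uminus_left algebra_simps)
    thus "-a \<in> I" unfolding I_def by (intro CollectI bexI[of _ "-y1"]) simp_all
  qed
  then obtain d where d: "d \<ge> 0" "d \<in> I" "\<And>t. t \<in> I \<Longrightarrow> d dvd t" by blast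
  have inI: "r \<in> I" if "zm r s \<in> G'" for r
  proof -
    have "zm r s + (- zm r s) \<in> B" using grpD(1)[OF B(1)] by simp
    moreover have "- zm r s \<in> G'" using that grpD(3)[OF gG'] by blast
    ultimately show ?thesis unfolding I_def by blast
  qed
  have B0: "grp (B \<inter> G')" "B \<inter> G' \<subseteq> add_span (set L)" using B(1) gG' grp_Int G'_def by auto
  have decomp: "\<exists>t y u w'. t \<in> I \<and> b = zm t s + y \<and> y \<in> G' \<and> w = zm u s + w' \<and> w' \<in> G'"
    if bB: "b \<in> B" and wG: "w \<in> add_span (set (s # L))" for b w
  proof -
    obtain t y where "b = zm t s + y" "y \<in> G'" using BG bB by blast
    moreover obtain u w' where "w = zm u s + w'" "w' \<in> G'" using wG G by blast
    moreover have "t \<in> I" unfolding I_def using calculation bB by blast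
    ultimately show ?thesis by blast
  qed
  have zmG: "zm k g \<in> G'" if "g \<in> G'" for k g using grp_zm[OF gG' that] .
  show ?case
  proof (cases "d dvd x0")
    case False
    define n where "n = (if d = 0 then \<bar>x0\<bar> + 1 else d)"
    have "n > 0" using d(1) n_def by auto
    moreover have "x \<noteq> b + zm n w" if bw: "b \<in> B" "w \<in> add_span (set (s # L))" for b w
    proof
      assume eq: "x = b + zm n w"
      obtain t y u w' where tyuw: "t \<in> I" "b = zm t s + y" "y \<in> G'" "w = zm u s + w'" "w' \<in> G'"
        using decomp[OF bw] by blast
      have h1: "zm x0 s + x' = zm t s + y + (zm (n*u) s + zm n w')"
        using eq unfolding x tyuw by (simp add: zm_plus zm_mult)
      have "zm (x0 - t - n*u) s = zm x0 s - zm t s - zm (n*u) s" by (simp add: zm_diff_left)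
      also have "\<dots> = y + zm n w' - x'" using h1 by (simp add: algebra_simps)
      also have "\<dots> \<in> G'" using grpD(4)[OF gG' grpD(2)[OF gG' tyuw(3) zmG[OF tyuw(5)]] x(2)] .
      finally have "x0 - t - n*u \<in> I" by (rule inI)
      hence d1: "d dvd x0 - t - n*u" using d(3) by blast
      have d2: "d dvd t" using d(3) tyuw by blast
      show False
      proof (cases "d = 0")
        case True
        hence "x0 = n * u" using d1 d2 by simp
        moreover have "\<bar>x0\<bar> < n" using True n_def by simp
        moreover have "\<bar>n * u\<bar> = n * \<bar>u\<bar>" using \<open>n > 0\<close> by (simp add: abs_mult)
        moreover have "u \<noteq> 0 \<Longrightarrow> n * \<bar>u\<bar> \<ge> n" using \<open>n > 0\<close> by simp
        ultimately have "x0 = 0" by (cases "u = 0") auto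
        thus False using False by simp
      next
        case False
        hence "n = d" using n_def by simp
        hence "x0 = (x0 - t - n*u) + t + d*u" by simp
        hence "d dvd x0" using d1 d2 by (metis dvd_add dvd_triv_left)
        thus False using \<open>\<not> d dvd x0\<close> by simp
      qed
    qed
    ultimately show ?thesis by blast
  next
    case True
    show ?thesis
    proof (cases "d = 0")
      case d0: True
      hence I0: "t \<in> I \<Longrightarrow> t = 0" for t using d(3) by fastforce
      have "x0 = 0" using True d0 by simp
      hence xx: "x = x'" using x by simp
      have "x \<notin> B \<inter> G'" using B(2) by blast
      then obtain n where n: "n > 0" "\<And>b w. b \<in> B \<inter> G' \<Longrightarrow> w \<in> G' \<Longrightarrow> x \<noteq> b + zm n w"
        using Cons(1)[OF B0] x(2) xx G'_def by metis
      have "x \<noteq> b + zm n w" if bw: "b \<in> B" "w \<in> add_span (set (s # L))" for b w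
      proof
        assume eq: "x = b + zm n w"
        obtain t y u w' where tyuw: "t \<in> I" "b = zm t s + y" "y \<in> G'" "w = zm u s + w'" "w' \<in> G'"
          using decomp[OF bw] by blast
        have t0: "t = 0" using I0 tyuw(1) .
        have h1: "x = y + (zm (n*u) s + zm n w')"
          using eq unfolding tyuw t0 by (simp add: zm_plus zm_mult)
        have "zm (n*u) s = x - y - zm n w'" using h1 by (simp add: algebra_simps)
        also have "\<dots> \<in> G'" using grpD(4)[OF gG' grpD(4)[OF gG' x(2) tyuw(3)] zmG[OF tyuw(5)]] xx by simp
        finally have "n * u = 0" using I0 inI by blast
        hence "u = 0" using n(1) by simp
        hence "x = b + zm n w'" using eq tyuw by simp
        moreover have "b \<in> B \<inter> G'" using bw(1) tyuw t0 by simp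
        ultimately show False using n(2) tyuw(5) by blast
      qed
      thus ?thesis using n(1) by blast
    next
      case dpos: False
      obtain m where m: "x0 = d * m" using True by blast
      obtain c where c: "c \<in> G'" "zm d s + c \<in> B" using d(2) unfolding I_def by blast
      define e where "e = zm d s + c"
      define x'' where "x'' = x' - zm m c"
      have xe: "x = zm m e + x''" unfolding x x''_def e_def m
        by (simp add: zm_plus mult.commute[of d m] zm_mult)
      have x''G: "x'' \<in> G'" unfolding x''_def using grpD(4)[OF gG' x(2) zmG[OF c(1)]] .
      have "x'' \<notin> B"
      proof
        assume "x'' \<in> B"
        hence "x \<in> B" unfolding xe using grpD(2)[OF B(1) grp_zm[OF B(1)]] c(2) e_def by blast
        thus False using B(2) by blast
      qed
      hence "x'' \<notin> B \<inter> G'" by blast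
      then obtain n' where n': "n' > 0" "\<And>b w. b \<in> B \<inter> G' \<Longrightarrow> w \<in> G' \<Longrightarrow> x'' \<noteq> b + zm n' w"
        using Cons(1)[OF B0] x''G G'_def by metis
      define n where "n = d * n'"
      have "n > 0" using n' dpos d(1) n_def by simp
      moreover have "x \<noteq> b + zm n w" if bw: "b \<in> B" "w \<in> add_span (set (s # L))" for b w
      proof
        assume eq: "x = b + zm n w"
        obtain t y u w' where tyuw: "t \<in> I" "b = zm t s + y" "y \<in> G'" "w = zm u s + w'" "w' \<in> G'"
          using decomp[OF bw] by blast
        obtain t' where t': "t = d * t'" using d(3) tyuw(1) by blast
        define r where "r = t' - m + n' * u"
        define b3 where "b3 = b - zm t' e + zm r e"
        have b3B: "b3 \<in> B" unfolding b3_def using bw(1) c(2) e_def grp_zm[OF B(1)] grpD[OF B(1)] by metis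
        have L: "x'' = zm (t + n*u - m*d) s + (zm (-m) c + (zm n w' + y))"
        proof -
          have "x'' = x - zm m e" using xe by simp
          also have "\<dots> = zm t s + y + zm n (zm u s) + zm n w' - zm m (zm d s) - zm m c"
            unfolding eq tyuw e_def by (simp add: zm_plus algebra_simps)
          also have "\<dots> = zm (t + n*u - m*d) s + (zm (-m) c + (zm n w' + y))"
            unfolding zm_add zm_diff_left zm_uminus_left zm_mult by (simp add: algebra_simps)
          finally show ?thesis .
        qed
        have R: "b3 + zm n' (zm d w' - zm u c) = zm (t - t'*d + r*d) s + (zm (r - t' - n'*u) c + (zm (n'*d) w' + y))"
        proof -
          have "b3 + zm n' (zm d w' - zm u c) = zm t s + y - zm t' (zm d s) - zm t' c + zm r (zm d s) + zm r c + zm n' (zm d w') - zm n' (zm u c)"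
            unfolding b3_def tyuw e_def by (simp add: zm_plus zm_minus_right algebra_simps)
          also have "\<dots> = zm (t - t'*d + r*d) s + (zm (r - t' - n'*u) c + (zm (n'*d) w' + y))"
            unfolding zm_add zm_diff_left zm_uminus_left zm_mult by (simp add: algebra_simps)
          finally show ?thesis .
        qed
        have co1: "t + n*u - m*d = t - t'*d + r*d" unfolding r_def n_def t' by (simp add: algebra_simps)
        have co2: "-m = r - t' - n'*u" unfolding r_def by simp
        have co3: "n = n' * d" unfolding n_def by simp
        have key: "x'' = b3 + zm n' (zm d w' - zm u c)"
          unfolding L R co1 co2 by (simp only: co3)
        have wG: "zm d w' - zm u c \<in> G'" using grpD(4)[OF gG' zmG[OF tyuw(5)] zmG[OF c(1)]] .
        have "b3 = x'' - zm n' (zm d w' - zm u c)" using key by simp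
        also have "\<dots> \<in> G'" using grpD(4)[OF gG' x''G zmG[OF wG]] .
        finally have "b3 \<in> B \<inter> G'" using b3B by blast
        thus False using n'(2) wG key by blast
      qed
      ultimately show ?thesis by blast
    qed
  qed
qed


lemma transport:
  fixes \<phi> :: "'a::ring \<Rightarrow> nat"
  assumes fin: "finite (range \<phi>)"
    and cadd: "\<And>x x' y y'. \<phi> x = \<phi> x' \<Longrightarrow> \<phi> y = \<phi> y' \<Longrightarrow> \<phi> (x+y) = \<phi> (x'+y')"
    and cmul: "\<And>x x' y y'. \<phi> x = \<phi> x' \<Longrightarrow> \<phi> y = \<phi> y' \<Longrightarrow> \<phi> (x*y) = \<phi> (x'*y')"
    and cneg: "\<And>x x'. \<phi> x = \<phi> x' \<Longrightarrow> \<phi> (-x) = \<phi> (-x')"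
  shows "\<exists>(F::nat set) pl ml z ng. finite F \<and> is_ring F pl ml z ng \<and> is_ring_hom \<phi> F pl ml"
proof -
  define r where "r = inv \<phi>"
  have r: "\<phi> (r (\<phi> x)) = \<phi> x" for x unfolding r_def by (simp add: f_inv_into_f)
  define pl where "pl = (\<lambda>i j. \<phi> (r i + r j))"
  define ml where "ml = (\<lambda>i j. \<phi> (r i * r j))"
  define ng where "ng = (\<lambda>i. \<phi> (- r i))"
  have pl: "pl (\<phi> x) (\<phi> y) = \<phi> (x+y)" for x y unfolding pl_def by (rule cadd[OF r r])
  have ml: "ml (\<phi> x) (\<phi> y) = \<phi> (x*y)" for x y unfolding ml_def by (rule cmul[OF r r])
  have ng: "ng (\<phi> x) = \<phi> (-x)" for x unfolding ng_def by (rule cneg[OF r])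
  have bR: "(\<forall>i\<in>range \<phi>. P i) \<longleftrightarrow> (\<forall>x. P (\<phi> x))" for P by auto
  have "is_ring (range \<phi>) pl ml (\<phi> 0) ng"
    unfolding is_ring_def bR pl ml ng by (simp add: algebra_simps)
  moreover have "is_ring_hom \<phi> (range \<phi>) pl ml"
    unfolding is_ring_hom_def pl ml by simp
  ultimately show ?thesis using fin by blast
qed

theorem lemma5:
  assumes "add_fin_gen TYPE('a::ring)"
  shows "finitely_separable TYPE('a)"
  unfolding finitely_separable_def
proof (intro allI impI)
  fix a :: 'a and A assume sA: "subring A" and aA: "a \<notin> A"
  obtain S :: "'a set" where S: "finite S" "add_span S = UNIV"
    using assms unfolding add_fin_gen_def by blast
  obtain L where L: "set L = S" using S(1) finite_list by blast
  have gA: "grp A" using sA unfolding subring_def grp_def by blast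
  obtain n where n: "n > 0" "\<And>b w. b \<in> A \<Longrightarrow> a \<noteq> b + zm n w"
    using closed[OF gA, of L a] L S(2) aA by auto
  define cs where "cs = (\<lambda>x::'a. {y. \<exists>w. y = x + zm n w})"
  have ceq: "cs x = cs y \<longleftrightarrow> (\<exists>w. x = y + zm n w)" for x y
  proof
    assume "cs x = cs y"
    moreover have "x \<in> cs x" unfolding cs_def by (auto intro: exI[of _ 0])
    ultimately show "\<exists>w. x = y + zm n w" unfolding cs_def by auto
  next
    assume "\<exists>w. x = y + zm n w"
    then obtain w where w: "x = y + zm n w" by blast
    have "cs x \<subseteq> cs y" unfolding cs_def
    proof safe
      fix v show "\<exists>w'. x + zm n v = y + zm n w'"
        by (rule exI[of _ "w + v"]) (simp add: w zm_plus add.assoc)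
    qed
    moreover have "cs y \<subseteq> cs x" unfolding cs_def
    proof safe
      fix v show "\<exists>w'. y + zm n v = x + zm n w'"
        by (rule exI[of _ "v - w"]) (simp add: w zm_minus_right)
    qed
    ultimately show "cs x = cs y" by blast
  qed
  have "range cs \<subseteq> (\<lambda>h. cs (\<Sum>s\<in>S. zm (h s) s)) ` (\<Pi>\<^sub>E s\<in>S. {0..<n})"
  proof safe
    fix x
    obtain h where h: "x = (\<Sum>s\<in>S. zm (h s) s)" using span_rep[OF S(1)] S(2) by blast
    define h' where "h' = restrict (\<lambda>s. h s mod n) S"
    have h'P: "h' \<in> (\<Pi>\<^sub>E s\<in>S. {0..<n})" unfolding h'_def using n(1) by auto
    have "zm (h s) s = zm (h s mod n) s + zm n (zm (h s div n) s)" for s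
    proof -
      have "h s = h s mod n + n * (h s div n)" by simp
      hence "zm (h s) s = zm (h s mod n + n * (h s div n)) s" by metis
      thus ?thesis by (simp only: zm_add zm_mult)
    qed
    hence "x = (\<Sum>s\<in>S. zm (h s mod n) s) + zm n (\<Sum>s\<in>S. zm (h s div n) s)"
      unfolding h by (simp add: sum.distrib zm_sum)
    moreover have "(\<Sum>s\<in>S. zm (h s mod n) s) = (\<Sum>s\<in>S. zm (h' s) s)"
      unfolding h'_def by (rule sum.cong) auto
    ultimately have "cs x = cs (\<Sum>s\<in>S. zm (h' s) s)" unfolding ceq by auto
    thus "cs x \<in> (\<lambda>h. cs (\<Sum>s\<in>S. zm (h s) s)) ` (\<Pi>\<^sub>E s\<in>S. {0..<n})" using h'P by blast
  qed
  moreover have "finite (\<Pi>\<^sub>E s\<in>S. {0..<n})" by (rule finite_PiE) (use S(1) in auto)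
  ultimately have fin: "finite (range cs)" by (meson finite_imageI finite_subset)
  obtain f where f: "bij_betw f (range cs) {0..<card (range cs)}" using ex_bij_betw_finite_nat[OF fin] by blast
  define \<phi> where "\<phi> = (\<lambda>x. f (cs x))"
  have phieq: "\<phi> x = \<phi> y \<longleftrightarrow> (\<exists>w. x = y + zm n w)" for x y
  proof -
    have "inj_on f (range cs)" using f bij_betw_def by blast
    hence "\<phi> x = \<phi> y \<longleftrightarrow> cs x = cs y" unfolding \<phi>_def by (auto dest: inj_onD)
    thus ?thesis using ceq by simp
  qed
  have "range \<phi> = f ` range cs" unfolding \<phi>_def by auto
  hence finphi: "finite (range \<phi>)" using fin by simp
  have "\<exists>(F::nat set) pl ml z ng. finite F \<and> is_ring F pl ml z ng \<and> is_ring_hom \<phi> F pl ml"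
  proof (rule transport[OF finphi])
    fix x x' y y' assume "\<phi> x = \<phi> x'" "\<phi> y = \<phi> y'"
    then obtain w1 w2 where w: "x = x' + zm n w1" "y = y' + zm n w2" using phieq by blast
    show "\<phi> (x+y) = \<phi> (x'+y')" unfolding phieq
      by (rule exI[of _ "w1 + w2"]) (simp add: w zm_plus algebra_simps)
    show "\<phi> (x*y) = \<phi> (x'*y')" unfolding phieq
      by (rule exI[of _ "w1 * y' + x' * w2 + zm n w1 * w2"])
        (simp add: w zm_plus zm_lmul zm_rmul algebra_simps)
  next
    fix x x' assume "\<phi> x = \<phi> x'"
    then obtain w1 where w: "x = x' + zm n w1" using phieq by blast
    show "\<phi> (-x) = \<phi> (-x')" unfolding phieq
      by (rule exI[of _ "- w1"]) (simp add: w zm_uminus_right)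
  qed
  then obtain F pl ml z ng where *: "finite F" "is_ring F pl ml z ng" "is_ring_hom \<phi> F pl ml" by blast
  have "\<phi> a \<notin> \<phi> ` A"
  proof
    assume "\<phi> a \<in> \<phi> ` A"
    then obtain b where "b \<in> A" "\<phi> a = \<phi> b" by blast
    thus False using phieq n(2) by blast
  qed
  thus "\<exists>(F::nat set) pl ml z ng \<phi>. finite F \<and> is_ring F pl ml z ng \<and> is_ring_hom \<phi> F pl ml \<and> \<phi> a \<notin> \<phi> ` A"
    using * by blast
qed

end
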